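(* Let $K$ be a field, $S=K[x_1,\dots,x_n]$, $A\subseteq\{1,\dots,n\}$, $f=\prod_{j\in A}x_j$, and let $J\subset I\subset S_f$ be monomial ideals. Let $\mathcal D: I/J=\bigoplus_{i=1}^r u_iK[Z_i]$ be a Stanley decomposition of $I/J$ and $d=\max\{|Z_i|: 1\le i\le r\}$. Then $H_{I/J}(t)=P_{I/J}(t)/(1-t)^d$ for a polynomial $P_{I/J}(t)$ with $P_{I/J}(1)=|\{i:\ |Z_i|=d\}|$.
   Context: $S_f=K[x_1,\dots,x_n,x_j^{-1}:j\in A]$; its monomials are $x^a=x_1^{a_1}\cdots x_n^{a_n}$ with $a_j\in\mathbb Z$ for $j\in A$, $a_j\in\mathbb N$ for $j\notin A$, and form a $K$-basis. Monomial ideals are ideals generated by monomials; for monomial ideals $J\subset I\subset S_f$, $I/J$ has $K$-basis the (classes of) monomials in $I\setminus J$, and is $\mathbb Z^n$-graded with $x^a$ of degree $a$. A Stanley space of $I/J$ is $uK[Z]$, the $K$-span in $I/J$ of all $uw$ with $w$ a monomial in elements of $Z$, where $u\in I\setminus J$ is a monomial, $Z\subseteq\{x_1,\dots,x_n\}\cup\{x_j^{-1}:j\in A\}$ with $\{x_j,x_j^{-1}\}\not\subseteq Z$ for $j\in A$, and $uK[Z]$ is a free $K[Z]$-submodule of $I/J$; its dimension is $|Z|$. A Stanley decomposition is a finite direct sum decomposition (as $K$-vector spaces) of $I/J$ into Stanley spaces. Hilbert series: for a $\mathbb Z^n$-graded $K$-vector space $M=\bigoplus_{a\in\mathbb Z^n}M_a$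 with all $\dim_K M_a<\infty$, set $|a|=\sum_j|a_j|$, $M_d=\bigoplus_{|a|=d}M_a$ for $d\in\mathbb N$, $H(M,d)=\dim_K M_d$ and $H_M(t)=\sum_{d\ge0}H(M,d)t^d$. *)

theory Defs
  imports "HOL-Computational_Algebra.Computational_Algebra"
begin

text \<open>Variables x_1..x_n are indexed by 0..<n. A monomial x^a of S_f is its exponent
  vector a :: nat => int (a j = 0 for j >= n, a j >= 0 for j not in A).\<close>

definition mons :: "nat \<Rightarrow> nat set \<Rightarrow> (nat \<Rightarrow> int) set" where
  "mons n A = {a. (\<forall>j\<ge>n. a j = 0) \<and> (\<forall>j<n. j \<notin> A \<longrightarrow> a j \<ge> 0)}"

text \<open>A monomial ideal of S_f, represented by its set of monomials (which form a K-basis of it):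
  a set of monomials closed under multiplication by arbitrary monomials of S_f.\<close>
definition monomial_ideal :: "nat \<Rightarrow> nat set \<Rightarrow> (nat \<Rightarrow> int) set \<Rightarrow> bool" where
  "monomial_ideal n A I \<longleftrightarrow> I \<subseteq> mons n A \<and> (\<forall>a\<in>I. \<forall>b\<in>mons n A. (\<lambda>j. a j + b j) \<in> I)"

text \<open>Generators of K[Z]: (j, True) stands for x_j, (j, False) for x_j^{-1} (j in A).\<close>
definition gens :: "nat \<Rightarrow> nat set \<Rightarrow> (nat \<times> bool) set" where
  "gens n A = {(j, True) | j. j < n} \<union> {(j, False) | j. j \<in> A}"

definition admissible :: "nat \<Rightarrow> nat set \<Rightarrow> (nat \<times> bool) set \<Rightarrow> bool" where
  "admissible n A Z \<longleftrightarrow> Z \<subseteq> gens n A \<and> (\<forall>j. \<not> ((j, True) \<in> Z \<and> (j, False) \<in> Z))"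

definition gexp :: "nat \<times> bool \<Rightarrow> nat \<Rightarrow> int" where
  "gexp z i = (if i = fst z then (if snd z then 1 else -1) else 0)"

definition zmons :: "(nat \<times> bool) set \<Rightarrow> (nat \<Rightarrow> int) set" where
  "zmons Z = {w. \<exists>c :: nat \<times> bool \<Rightarrow> nat. w = (\<lambda>i. \<Sum>z\<in>Z. int (c z) * gexp z i)}"

definition stanley_mons :: "(nat \<Rightarrow> int) \<Rightarrow> (nat \<times> bool) set \<Rightarrow> (nat \<Rightarrow> int) set" where
  "stanley_mons u Z = (\<lambda>w. (\<lambda>j. u j + w j)) ` zmons Z"

text \<open>uK[Z] is a Stanley space of I/J: u a monomial in I - J, Z admissible, and uK[Z] free
  over K[Z], i.e. no u w vanishes in I/J.\<close>
definition stanley_space ::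
  "nat \<Rightarrow> nat set \<Rightarrow> (nat \<Rightarrow> int) set \<Rightarrow> (nat \<Rightarrow> int) set \<Rightarrow> (nat \<Rightarrow> int) \<Rightarrow> (nat \<times> bool) set \<Rightarrow> bool" where
  "stanley_space n A I J u Z \<longleftrightarrow> u \<in> I \<and> u \<notin> J \<and> admissible n A Z \<and>
     (\<forall>w\<in>zmons Z. (\<lambda>j. u j + w j) \<notin> J)"

text \<open>A Stanley decomposition I/J = (+)_i u_i K[Z_i]: a finite list of Stanley spaces whose
  sum is direct and equals I/J; since all spaces are spanned by monomials, this says the
  monomial sets are pairwise disjoint and cover the monomial basis I - J of I/J.\<close>
definition stanley_decomposition ::
  "nat \<Rightarrow> nat set \<Rightarrow> (nat \<Rightarrow> int) set \<Rightarrow> (nat \<Rightarrow> int) set \<Rightarrow> ((nat \<Rightarrow> int) \<times> (nat \<times> bool) set) list \<Rightarrow> bool" where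
  "stanley_decomposition n A I J D \<longleftrightarrow>
     (\<forall>i<length D. stanley_space n A I J (fst (D ! i)) (snd (D ! i))) \<and>
     (\<forall>i<length D. \<forall>k<length D. i \<noteq> k \<longrightarrow>
        stanley_mons (fst (D ! i)) (snd (D ! i)) \<inter> stanley_mons (fst (D ! k)) (snd (D ! k)) = {}) \<and>
     (\<Union>i<length D. stanley_mons (fst (D ! i)) (snd (D ! i))) = I - J"

definition absdeg :: "nat \<Rightarrow> (nat \<Rightarrow> int) \<Rightarrow> nat" where
  "absdeg n a = nat (\<Sum>j<n. \<bar>a j\<bar>)"

text \<open>H(I/J, d) = dim_K (I/J)_d = number of monomials in I - J with |a| = d.\<close>
definition hilbert_fun :: "nat \<Rightarrow> (nat \<Rightarrow> int) set \<Rightarrow> (nat \<Rightarrow> int) set \<Rightarrow> nat \<Rightarrow> nat" where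
  "hilbert_fun n I J d = card {a \<in> I - J. absdeg n a = d}"

definition hilbert_series :: "nat \<Rightarrow> (nat \<Rightarrow> int) set \<Rightarrow> (nat \<Rightarrow> int) set \<Rightarrow> int fps" where
  "hilbert_series n I J = Abs_fps (\<lambda>d. int (hilbert_fun n I J d))"

end

theory Submission
  imports Defs
begin

lemma telesc:
  fixes f :: "int fps"
  shows "(\<Sum>i\<le>N. (f * (1 - fps_X)) $ i) = f $ N"
proof (induction N)
  case 0 then show ?case by (simp add: algebra_simps)
next
  case (Suc N)
  have "(f * (1 - fps_X)) $ Suc N = f $ Suc N - f $ N"
    by (simp add: algebra_simps mult.commute[of f])
  then show ?case using Suc by simp
qed

lemma evconst:
  fixes f :: "int fps"
  assumes "\<And>d. d \<ge> N \<Longrightarrow> f $ d = L"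
  shows "\<exists>Q. f * (1 - fps_X) = fps_of_poly Q \<and> poly Q 1 = L"
proof -
  define h where "h = f * (1 - fps_X)"
  define Q where "Q = (\<Sum>i\<le>N. monom (h $ i) i)"
  have hz: "h $ d = 0" if dN: "d > N" for d
  proof -
    obtain m where m: "d = Suc m" using dN by (cases d) auto
    have "h $ d = f $ d - f $ m" unfolding h_def m
      by (simp add: algebra_simps mult.commute[of f])
    also have "\<dots> = 0" using assms[of d] assms[of m] dN m by simp
    finally show ?thesis .
  qed
  have "fps_of_poly Q = h"
  proof (rule fps_ext)
    fix d
    have "fps_of_poly Q $ d = (\<Sum>i\<le>N. if i = d then h $ i else 0)"
      unfolding Q_def by (simp add: coeff_sum)
    also have "\<dots> = h $ d" using hz[of d] by (simp add: sum.delta)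
    finally show "fps_of_poly Q $ d = h $ d" .
  qed
  moreover have "poly Q 1 = L"
    unfolding Q_def using telesc[of f N] assms[of N] by (simp add: poly_sum poly_monom h_def)
  ultimately show ?thesis unfolding h_def by metis
qed


definition tl1 :: "int set \<Rightarrow> nat \<Rightarrow> int set" where
  "tl1 S d = {x\<in>S. \<bar>x\<bar> = int d}"

definition gT :: "int set \<Rightarrow> int fps" where
  "gT S = Abs_fps (\<lambda>d. int (card (tl1 S d)))"

lemma finite_tl1: "finite (tl1 S d)"
  by (rule finite_subset[of _ "{int d, - int d}"]) (auto simp: tl1_def abs_if)

lemma gT_single: "gT {c} = fps_of_poly (monom 1 (nat \<bar>c\<bar>))"
proof (rule fps_ext)
  fix d
  have "tl1 {c} d = (if d = nat \<bar>c\<bar> then {c} else {})" by (auto simp: tl1_def)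
  then show "gT {c} $ d = fps_of_poly (monom 1 (nat \<bar>c\<bar>)) $ d"
    by (simp add: gT_def)
qed

lemma gT_ray: "\<exists>Q. gT {c..} * (1 - fps_X) = fps_of_poly Q \<and> poly Q 1 = 1"
proof (rule evconst[of "nat \<bar>c\<bar> + 1"])
  fix d assume "d \<ge> nat \<bar>c\<bar> + 1"
  then have "int d > \<bar>c\<bar>" by linarith
  then have "tl1 {c..} d = {int d}" by (auto simp: tl1_def split: if_splits)
  then show "gT {c..} $ d = 1" by (simp add: gT_def)
qed

lemma gT_neg: "gT {..c} = gT {-c..}"
proof -
  have "tl1 {..c} d = uminus ` tl1 {-c..} d" for d
    by (auto simp: tl1_def image_iff intro!: exI[of _ "- _"])
  then have "card (tl1 {..c} d) = card (tl1 {-c..} d)" for d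
    by (simp add: card_image)
  then show ?thesis by (simp add: gT_def)
qed

definition box :: "nat \<Rightarrow> (nat \<Rightarrow> int set) \<Rightarrow> (nat \<Rightarrow> int) set" where
  "box k T = {a. (\<forall>j<k. a j \<in> T j) \<and> (\<forall>j\<ge>k. a j = 0)}"

definition lev :: "nat \<Rightarrow> (nat \<Rightarrow> int set) \<Rightarrow> nat \<Rightarrow> (nat \<Rightarrow> int) set" where
  "lev k T d = {a \<in> box k T. (\<Sum>j<k. \<bar>a j\<bar>) = int d}"

lemma lev_0: "lev 0 T d = (if d = 0 then {\<lambda>_. 0} else {})"
  by (auto simp: lev_def box_def)

lemma lev_Suc: "lev (Suc k) T d =
  (\<lambda>(e, b, x). b(k := x)) ` (SIGMA e:{..d}. lev k T e \<times> tl1 (T k) (d - e))"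
proof (intro set_eqI iffI)
  fix a assume a: "a \<in> lev (Suc k) T d"
  define e where "e = nat (\<Sum>j<k. \<bar>a j\<bar>)"
  have s: "(\<Sum>j<k. \<bar>a j\<bar>) = int e" unfolding e_def by (simp add: sum_nonneg)
  have s2: "(\<Sum>j<k. \<bar>(a(k:=0)) j\<bar>) = (\<Sum>j<k. \<bar>a j\<bar>)" by (rule sum.cong) auto
  have tot: "(\<Sum>j<k. \<bar>a j\<bar>) + \<bar>a k\<bar> = int d" using a by (simp add: lev_def)
  have "(e, a(k:=0), a k) \<in> (SIGMA e:{..d}. lev k T e \<times> tl1 (T k) (d - e))"
    using a s s2 tot by (auto simp: lev_def box_def tl1_def)
  moreover have "a = (\<lambda>(e, b, x). b(k := x)) (e, a(k:=0), a k)" by simp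
  ultimately show "a \<in> (\<lambda>(e, b, x). b(k := x)) ` (SIGMA e:{..d}. lev k T e \<times> tl1 (T k) (d - e))"
    by blast
next
  fix a assume "a \<in> (\<lambda>(e, b, x). b(k := x)) ` (SIGMA e:{..d}. lev k T e \<times> tl1 (T k) (d - e))"
  then obtain e b x where eb: "e \<le> d" "b \<in> lev k T e" "x \<in> tl1 (T k) (d - e)" and a: "a = b(k:=x)"
    by auto
  have s2: "(\<Sum>j<k. \<bar>(b(k:=x)) j\<bar>) = (\<Sum>j<k. \<bar>b j\<bar>)" by (rule sum.cong) auto
  show "a \<in> lev (Suc k) T d"
    using eb s2 unfolding a by (auto simp: lev_def box_def tl1_def less_Suc_eq)
qed

lemma lev_Suc_inj: "inj_on (\<lambda>(e, b, x). b(k := x)) (SIGMA e:{..d}. lev k T e \<times> tl1 (T k) (d - e))"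
proof (rule inj_onI, clarsimp)
  fix e b x e' b' x'
  assume h: "b \<in> lev k T e" "b' \<in> lev k T e'" "b(k := x) = b'(k := x')"
  have "x = x'" using fun_cong[OF h(3), of k] by simp
  moreover have "b = b'"
  proof
    fix j show "b j = b' j"
      using fun_cong[OF h(3), of j] h(1,2) by (cases "j = k") (auto simp: lev_def box_def)
  qed
  moreover have "e = e'" using h `b = b'` by (simp add: lev_def)
  ultimately show "e = e' \<and> b = b' \<and> x = x'" by simp
qed

lemma lev_finite: "finite (lev k T d)"
proof (induction k arbitrary: d)
  case 0 then show ?case by (simp add: lev_0)
next
  case (Suc k) then show ?case by (simp add: lev_Suc finite_tl1)
qed

lemma lev_fps: "Abs_fps (\<lambda>d. int (card (lev k T d))) = (\<Prod>j<k. gT (T j))"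
proof (induction k)
  case 0 then show ?case by (rule fps_ext) (simp add: lev_0)
next
  case (Suc k)
  have "card (lev (Suc k) T d) = (\<Sum>e\<le>d. card (lev k T e) * card (tl1 (T k) (d - e)))" for d
    unfolding lev_Suc by (simp add: card_image[OF lev_Suc_inj] card_SigmaI lev_finite finite_tl1 card_cartesian_product)
  then have "Abs_fps (\<lambda>d. int (card (lev (Suc k) T d))) = Abs_fps (\<lambda>d. int (card (lev k T d))) * gT (T k)"
    by (intro fps_ext) (simp add: fps_mult_nth gT_def atLeast0AtMost)
  then show ?case using Suc by simp
qed


lemma prod_rule:
  assumes "finite S" "\<And>j. j \<in> S \<Longrightarrow> g j * (1 - fps_X) ^ e j = fps_of_poly (Q j) \<and> poly (Q j) 1 = (1::int)"
  shows "(\<Prod>j\<in>S. g j) * (1 - fps_X) ^ (\<Sum>j\<in>S. e j) = fps_of_poly (\<Prod>j\<in>S. Q j)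
     \<and> poly (\<Prod>j\<in>S. Q j) 1 = 1"
  using assms
proof (induction S rule: finite_induct)
  case empty then show ?case by simp
next
  case (insert x F)
  then have h: "g x * (1 - fps_X) ^ e x = fps_of_poly (Q x)" "poly (Q x) 1 = 1" by auto
  from insert have ih: "(\<Prod>j\<in>F. g j) * (1 - fps_X) ^ (\<Sum>j\<in>F. e j) = fps_of_poly (\<Prod>j\<in>F. Q j)"
     "poly (\<Prod>j\<in>F. Q j) 1 = 1" by auto
  have "(\<Prod>j\<in>insert x F. g j) * (1 - fps_X) ^ (\<Sum>j\<in>insert x F. e j) =
     (g x * (1 - fps_X) ^ e x) * ((\<Prod>j\<in>F. g j) * (1 - fps_X) ^ (\<Sum>j\<in>F. e j))"
    using insert(1,2) by (simp add: power_add mult_ac)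
  also have "\<dots> = fps_of_poly (Q x) * fps_of_poly (\<Prod>j\<in>F. Q j)" by (simp only: h ih)
  finally show ?case using h ih insert by (simp add: fps_of_poly_mult poly_prod)
qed

lemma zsum:
  assumes "finite Z"
  shows "(\<Sum>z\<in>Z. int (c z) * gexp z i) =
    (if (i,True)\<in>Z then int (c (i,True)) else 0) - (if (i,False)\<in>Z then int (c (i,False)) else 0)"
proof -
  have "int (c z) * gexp z i = (if z = (i,True) then int (c z) else 0) - (if z = (i,False) then int (c z) else 0)" for z
    by (cases z) (auto simp: gexp_def)
  then have "(\<Sum>z\<in>Z. int (c z) * gexp z i) =
     (\<Sum>z\<in>Z. (if z = (i,True) then int (c z) else 0)) - (\<Sum>z\<in>Z. (if z = (i,False) then int (c z) else 0))"
    by (simp add: sum_subtractf[symmetric])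
  also have "\<dots> = (if (i,True)\<in>Z then int (c (i,True)) else 0) - (if (i,False)\<in>Z then int (c (i,False)) else 0)"
    using assms by (simp add: sum.delta')
  finally show ?thesis .
qed

lemma csum:
  assumes "finite Z"
  shows "(\<Sum>z\<in>Z. if fst z = j then 1 else 0) =
    (if (j,True)\<in>Z then 1 else 0) + (if (j,False)\<in>Z then (1::nat) else 0)"
proof -
  have "(if fst z = j then 1 else 0) = (if z = (j,True) then 1 else 0) + (if z = (j,False) then (1::nat) else 0)" for z
    by (cases z) auto
  then have "(\<Sum>z\<in>Z. if fst z = j then 1 else 0) =
     (\<Sum>z\<in>Z. (if z = (j,True) then 1 else 0)) + (\<Sum>z\<in>Z. (if z = (j,False) then (1::nat) else 0))"
    by (simp add: sum.distrib)
  also have "\<dots> = (if (j,True)\<in>Z then 1 else 0) + (if (j,False)\<in>Z then (1::nat) else 0)"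
    using assms by (simp add: sum.delta')
  finally show ?thesis .
qed

lemma zmons_char:
  assumes "finite Z" "\<And>j. \<not> ((j, True) \<in> Z \<and> (j, False) \<in> Z)"
  shows "w \<in> zmons Z \<longleftrightarrow>
    (\<forall>j. if (j,True)\<in>Z then w j \<ge> 0 else if (j,False)\<in>Z then w j \<le> 0 else w j = 0)"
proof
  assume "w \<in> zmons Z"
  then obtain c where c: "w = (\<lambda>i. \<Sum>z\<in>Z. int (c z) * gexp z i)" by (auto simp: zmons_def)
  show "\<forall>j. if (j,True)\<in>Z then w j \<ge> 0 else if (j,False)\<in>Z then w j \<le> 0 else w j = 0"
    using assms unfolding c zsum[OF assms(1)] by auto
next
  assume h: "\<forall>j. if (j,True)\<in>Z then w j \<ge> 0 else if (j,False)\<in>Z then w j \<le> 0 else w j = 0"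
  define c where "c z = nat \<bar>w (fst z)\<bar>" for z :: "nat \<times> bool"
  have "w = (\<lambda>i. \<Sum>z\<in>Z. int (c z) * gexp z i)"
  proof
    fix i show "w i = (\<Sum>z\<in>Z. int (c z) * gexp z i)"
      unfolding zsum[OF assms(1)] c_def using h[rule_format, of i] assms(2)[of i]
      by (auto split: if_splits)
  qed
  then show "w \<in> zmons Z" unfolding zmons_def by blast
qed

definition Tz :: "(nat \<Rightarrow> int) \<Rightarrow> (nat \<times> bool) set \<Rightarrow> nat \<Rightarrow> int set" where
  "Tz u Z j = (if (j,True)\<in>Z then {u j..} else if (j,False)\<in>Z then {..u j} else {u j})"

lemma stanley_box:
  assumes "finite Z" "\<And>j. \<not> ((j, True) \<in> Z \<and> (j, False) \<in> Z)"
    and "\<And>z. z \<in> Z \<Longrightarrow> fst z < n" and "\<And>j. j \<ge> n \<Longrightarrow> u j = 0"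
  shows "stanley_mons u Z = box n (Tz u Z)"
proof (intro set_eqI iffI)
  fix a assume "a \<in> stanley_mons u Z"
  then obtain w where w: "w \<in> zmons Z" "a = (\<lambda>j. u j + w j)" by (auto simp: stanley_mons_def)
  note wc = w(1)[unfolded zmons_char[OF assms(1,2)], rule_format]
  show "a \<in> box n (Tz u Z)" unfolding box_def Tz_def
  proof (intro CollectI conjI allI impI)
    fix j assume "j < n"
    show "a j \<in> (if (j,True)\<in>Z then {u j..} else if (j,False)\<in>Z then {..u j} else {u j})"
      using wc[of j] w(2) by (auto split: if_splits)
  next
    fix j assume j: "n \<le> j"
    then have "(j,True) \<notin> Z" "(j,False) \<notin> Z" using assms(3) by force+
    then show "a j = 0" using wc[of j] w(2) assms(4)[OF j] by auto
  qed
next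
  fix a assume a: "a \<in> box n (Tz u Z)"
  define w where "w j = a j - u j" for j
  have "\<forall>j. if (j,True)\<in>Z then w j \<ge> 0 else if (j,False)\<in>Z then w j \<le> 0 else w j = 0"
  proof
    fix j
    show "if (j,True)\<in>Z then w j \<ge> 0 else if (j,False)\<in>Z then w j \<le> 0 else w j = 0"
    proof (cases "j < n")
      case True then show ?thesis using a unfolding box_def Tz_def w_def by (auto split: if_splits)
    next
      case False
      then have "(j,True) \<notin> Z" "(j,False) \<notin> Z" using assms(3) by force+
      then show ?thesis using a False assms(4)[of j] unfolding box_def w_def by auto
    qed
  qed
  then have "w \<in> zmons Z" using zmons_char[OF assms(1,2)] by blast
  moreover have "a = (\<lambda>j. u j + w j)" by (auto simp: w_def)
  ultimately show "a \<in> stanley_mons u Z" unfolding stanley_mons_def by blast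
qed

definition ser :: "nat \<Rightarrow> (nat \<Rightarrow> int) set \<Rightarrow> int fps" where
  "ser n S = Abs_fps (\<lambda>d. int (card {a\<in>S. absdeg n a = d}))"

lemma ser_box: "ser n (box n T) = (\<Prod>j<n. gT (T j))"
proof -
  have "{a\<in>box n T. absdeg n a = d} = lev n T d" for d
    by (auto simp: lev_def absdeg_def sum_nonneg)
  then show ?thesis using lev_fps[of n T] by (simp add: ser_def)
qed

lemma stanley_ser:
  assumes "finite Z" "\<And>j. \<not> ((j, True) \<in> Z \<and> (j, False) \<in> Z)"
    and "\<And>z. z \<in> Z \<Longrightarrow> fst z < n" and "\<And>j. j \<ge> n \<Longrightarrow> u j = 0"
  shows "\<exists>Q. ser n (stanley_mons u Z) * (1 - fps_X) ^ card Z = fps_of_poly Q \<and> poly Q 1 = 1"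
proof -
  define e where "e j = (if (j,True)\<in>Z then 1 else 0) + (if (j,False)\<in>Z then (1::nat) else 0)" for j
  have "\<exists>Q. gT (Tz u Z j) * (1 - fps_X) ^ e j = fps_of_poly Q \<and> poly Q 1 = 1" for j
  proof (cases "(j,True)\<in>Z")
    case True
    then show ?thesis using assms(2)[of j] gT_ray[of "u j"] by (simp add: e_def Tz_def)
  next
    case F: False
    show ?thesis
    proof (cases "(j,False)\<in>Z")
      case True
      then show ?thesis using F gT_ray[of "- u j"] by (simp add: e_def Tz_def gT_neg)
    next
      case False
      then show ?thesis using F by (auto simp: e_def Tz_def gT_single poly_monom)
    qed
  qed
  then obtain Q where Q: "\<And>j. gT (Tz u Z j) * (1 - fps_X) ^ e j = fps_of_poly (Q j) \<and> poly (Q j) 1 = 1"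
    by metis
  have "card Z = (\<Sum>j<n. e j)"
  proof -
    have "(\<Sum>j<n. e j) = (\<Sum>j<n. \<Sum>z\<in>Z. if fst z = j then 1 else 0)"
      unfolding e_def using csum[OF assms(1)] by simp
    also have "\<dots> = (\<Sum>z\<in>Z. \<Sum>j<n. if fst z = j then 1 else 0)" by (rule sum.swap)
    also have "\<dots> = (\<Sum>z\<in>Z. 1)" using assms(3) by (intro sum.cong) (auto simp: sum.delta)
    finally show ?thesis by simp
  qed
  moreover have "ser n (stanley_mons u Z) = (\<Prod>j<n. gT (Tz u Z j))"
    using stanley_box[OF assms] ser_box by simp
  ultimately show ?thesis
    using prod_rule[of "{..<n}" "\<lambda>j. gT (Tz u Z j)" e Q] Q by auto
qed


lemma box_level: "{a\<in>box n T. absdeg n a = d} = lev n T d"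
  by (auto simp: lev_def absdeg_def sum_nonneg)

lemma gens_fin: "A \<subseteq> {..<n} \<Longrightarrow> finite (gens n A)"
  by (rule finite_subset[of _ "{..<n} \<times> UNIV"]) (auto simp: gens_def)

lemma gens_lt: "A \<subseteq> {..<n} \<Longrightarrow> z \<in> gens n A \<Longrightarrow> fst z < n"
  by (auto simp: gens_def)

theorem theorem6p5:
  fixes n :: nat and A :: "nat set" and I J :: "(nat \<Rightarrow> int) set"
    and D :: "((nat \<Rightarrow> int) \<times> (nat \<times> bool) set) list"
  assumes "A \<subseteq> {..<n}"
    and "monomial_ideal n A I" and "monomial_ideal n A J" and "J \<subseteq> I"
    and "stanley_decomposition n A I J D"
  shows "let d = Max (insert 0 ((\<lambda>i. card (snd (D ! i))) ` {..<length D})) in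
    \<exists>P :: int poly. hilbert_series n I J * (1 - fps_X) ^ d = fps_of_poly P \<and>
      poly P 1 = int (card {i. i < length D \<and> card (snd (D ! i)) = d})"
proof -
  define L where "L = length D"
  define S where "S i = stanley_mons (fst (D ! i)) (snd (D ! i))" for i
  define k where "k i = card (snd (D ! i))" for i
  define d where "d = Max (insert 0 (k ` {..<L}))"
  have sp: "stanley_space n A I J (fst (D ! i)) (snd (D ! i))" if "i < L" for i
    using assms(5) that unfolding stanley_decomposition_def L_def by blast
  have cond: "finite (snd (D ! i)) \<and> (\<forall>j. \<not> ((j, True) \<in> snd (D ! i) \<and> (j, False) \<in> snd (D ! i)))
     \<and> (\<forall>z\<in>snd (D ! i). fst z < n) \<and> (\<forall>j\<ge>n. fst (D ! i) j = 0)" if "i < L" for i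
  proof -
    have "fst (D ! i) \<in> I" "admissible n A (snd (D ! i))" using sp[OF that] by (auto simp: stanley_space_def)
    moreover have "I \<subseteq> mons n A" using assms(2) by (simp add: monomial_ideal_def)
    ultimately show ?thesis using gens_fin[OF assms(1)] gens_lt[OF assms(1)]
      by (auto simp: admissible_def mons_def intro: finite_subset)
  qed
  have box: "\<exists>T. S i = box n T" if "i < L" for i
    using cond[OF that] stanley_box[of "snd (D ! i)" n "fst (D ! i)"] unfolding S_def by blast
  have finlev: "finite {a\<in>S i. absdeg n a = e}" if "i < L" for i e
    using box[OF that] box_level lev_finite by metis
  have disj: "S i \<inter> S j = {}" if "i < L" "j < L" "i \<noteq> j" for i j
    using assms(5) that unfolding stanley_decomposition_def L_def S_def by blast
  have un: "(\<Union>i<L. S i) = I - J"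
    using assms(5) unfolding stanley_decomposition_def L_def S_def by blast
  have H: "hilbert_series n I J = (\<Sum>i<L. ser n (S i))"
  proof (rule fps_ext)
    fix e
    have "{a \<in> I - J. absdeg n a = e} = (\<Union>i<L. {a\<in>S i. absdeg n a = e})" using un by blast
    then have "card {a \<in> I - J. absdeg n a = e} = (\<Sum>i<L. card {a\<in>S i. absdeg n a = e})"
      using finlev disj by (simp add: card_UN_disjoint, subst card_UN_disjoint) blast+
    then show "hilbert_series n I J $ e = (\<Sum>i<L. ser n (S i)) $ e"
      by (simp add: hilbert_series_def hilbert_fun_def ser_def fps_sum_nth)
  qed
  have "\<exists>Q. ser n (S i) * (1 - fps_X) ^ k i = fps_of_poly Q \<and> poly Q 1 = 1" if "i < L" for i
    using cond[OF that] stanley_ser[of "snd (D ! i)" n "fst (D ! i)"] unfolding S_def k_def by blast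
  then obtain Q where Q: "\<And>i. i < L \<Longrightarrow> ser n (S i) * (1 - fps_X) ^ k i = fps_of_poly (Q i) \<and> poly (Q i) 1 = 1"
    by metis
  have kd: "k i \<le> d" if "i < L" for i
    unfolding d_def using that by (intro Max_ge) auto
  define P where "P = (\<Sum>i<L. Q i * (1 - monom 1 1) ^ (d - k i))"
  have "hilbert_series n I J * (1 - fps_X) ^ d = (\<Sum>i<L. ser n (S i) * (1 - fps_X) ^ k i * (1 - fps_X) ^ (d - k i))"
    unfolding H sum_distrib_right
  proof (rule sum.cong)
    fix i assume "i \<in> {..<L}"
    then have "d = k i + (d - k i)" using kd by simp
    then have "(1 - fps_X) ^ d = (1 - fps_X) ^ k i * ((1 - fps_X :: int fps) ^ (d - k i))"
      by (metis power_add)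
    then show "ser n (S i) * (1 - fps_X) ^ d = ser n (S i) * (1 - fps_X) ^ k i * (1 - fps_X) ^ (d - k i)"
      by (simp add: mult.assoc)
  qed simp
  also have "\<dots> = fps_of_poly P"
    unfolding P_def fps_of_poly_sum
    by (rule sum.cong) (simp_all add: Q fps_of_poly_mult fps_of_poly_power fps_of_poly_diff fps_of_poly_monom')
  finally have e1: "hilbert_series n I J * (1 - fps_X) ^ d = fps_of_poly P" .
  have "poly P 1 = (\<Sum>i<L. if k i = d then 1 else 0)"
    unfolding P_def poly_sum
  proof (rule sum.cong)
    fix i assume "i \<in> {..<L}"
    then show "poly (Q i * (1 - monom 1 1) ^ (d - k i)) 1 = (if k i = d then 1 else 0)"
      using Q[of i] kd[of i] by (simp add: poly_monom)
  qed simp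
  also have "\<dots> = int (card {i. i < L \<and> k i = d})"
    by (simp add: sum.If_cases Int_def conj_commute)
  finally have e2: "poly P 1 = int (card {i. i < L \<and> k i = d})" .
  show ?thesis unfolding Let_def
    using e1 e2 unfolding d_def k_def L_def by blast
qed

end
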